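(* Let $m\ge3$ be an integer and let $n$ be a positive divisor of $\frac{3^m-1}{2}$ with $n>\frac{3^{\lfloor m/2\rfloor}+1}{2}$. Let $\beta$ be a primitive $2n$-th root of unity in an extension field of $\mathrm{GF}(3)$, and for $i$ let $\mathbb{M}_{\beta^i}(x)$ be the minimal polynomial of $\beta^i$ over $\mathrm{GF}(3)$. Then $\mathrm{ord}_{2n}(3)=m$ and $\mathrm{lcm}(\mathbb{M}_\beta(x),\mathbb{M}_{\beta^{2n-1}}(x))=\mathbb{M}_\beta(x)\mathbb{M}_{\beta^{2n-1}}(x)$.
   Context: $\mathrm{ord}_M(3)$ is the multiplicative order of $3$ modulo $M$; lcm is the least common multiple of polynomials. *)

theory Defs
  imports "Berlekamp_Zassenhaus.Finite_Field"
    "HOL-Computational_Algebra.Polynomial_Factorial"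
    "HOL-Number_Theory.Number_Theory"
begin

text \<open>A three-element type, so that \<open>three mod_ring\<close> is the field GF(3).\<close>
typedef three = "{0::nat, 1, 2}" by auto

lemma card_three: "CARD(three) = 3"
  using type_definition.card[OF type_definition_three] by simp

instance three :: finite
proof
  show "finite (UNIV :: three set)"
    using card_three card.infinite by fastforce
qed

instance three :: prime_card
  by standard (simp add: card_three)

type_synonym gf3 = "three mod_ring"

definition gf3_emb :: "gf3 \<Rightarrow> 'a::field" where
  "gf3_emb x = of_int (to_int_mod_ring x)"

definition min_poly_gf3 :: "'a::field \<Rightarrow> gf3 poly" where
  "min_poly_gf3 \<alpha> = (THE p. lead_coeff p = 1 \<and> poly (map_poly gf3_emb p) \<alpha> = 0 \<and>
      (\<forall>q. q \<noteq> 0 \<and> poly (map_poly gf3_emb q) \<alpha> = 0 \<longrightarrow> degree p \<le> degree q))"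

definition primitive_root_unity :: "nat \<Rightarrow> 'a::field \<Rightarrow> bool" where
  "primitive_root_unity N b \<longleftrightarrow> b ^ N = 1 \<and> (\<forall>k. 0 < k \<and> k < N \<longrightarrow> b ^ k \<noteq> 1)"

end

theory Submission
  imports Defs
begin


lemma gf3_emb_hom:
  assumes "CHAR('a::field) = 3"
  shows "field_hom (gf3_emb :: gf3 \<Rightarrow> 'a)"
proof -
  have c: "CARD(three) = CHAR('a)" using assms card_three by simp
  show ?thesis
  proof (unfold_locales)
    show "gf3_emb 0 = (0::'a)" by (simp add: gf3_emb_def)
    show "gf3_emb 1 = (1::'a)" by (simp add: gf3_emb_def)
    fix x y :: gf3
    show "gf3_emb (x * y) = (gf3_emb x * gf3_emb y :: 'a)"
      unfolding gf3_emb_def to_int_mod_ring_mult c by simp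
    show "gf3_emb (x + y) = (gf3_emb x + gf3_emb y :: 'a)"
      unfolding gf3_emb_def to_int_mod_ring_add c by simp
  qed
qed

lemma frob_hom:
  assumes "CHAR('a::field) = 3"
  shows "field_hom (\<lambda>x::'a. x ^ 3)"
proof (unfold_locales)
  fix x y :: 'a
  have "(of_nat 3 :: 'a) = 0" using assms by (metis of_nat_CHAR)
  then have t: "(3::'a) = 0" by simp
  have "(x + y) ^ 3 = x^3 + y^3 + 3 * (x*y*(x+y))" by (simp add: algebra_simps power3_eq_cube)
  then show "(x + y) ^ 3 = x^3 + y^3" using t by simp
qed (auto simp: power_mult_distrib)



lemma cong3: "[3 ^ d = 1] (mod N) \<longleftrightarrow> N dvd 3 ^ d - (1::nat)"
  by (simp add: cong_altdef_nat)

lemma nt_part: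
  fixes m n :: nat
  assumes "m \<ge> 3" "n > 0" "n dvd (3 ^ m - 1) div 2"
    and "real n > (3 ^ (m div 2) + 1) / 2"
  shows "ord (2 * n) 3 = m" "\<And>j. j < m \<Longrightarrow> \<not> (2 * n) dvd 3 ^ j + 1"
proof -
  have ev: "even (3 ^ m - 1 :: nat)" by simp
  have N: "2 * n dvd 3 ^ m - 1" using assms(3) ev
    by (metis dvd_mult_div_cancel mult_dvd_mono dvd_refl)
  have big: "3 ^ (m div 2) + 1 < 2 * n" using assms(4)
  proof -
    have "real (3 ^ (m div 2) + 1) < real (2 * n)" using assms(4) by simp
    then show ?thesis by linarith
  qed
  have md: "m div 2 \<ge> 1" using assms(1) by simp
  have "(3::nat) ^ 1 \<le> 3 ^ (m div 2)" using md by (rule power_increasing) simp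
  then have n2: "n > 2" using big by simp
  have cop: "coprime (2*n) 3"
  proof -
    have "[3 ^ m = 1] (mod 2*n)" using N cong3 by blast
    then have "ord (2*n) 3 dvd m" using ord_divides by blast
    have "coprime (3 ^ m) (2*n)"
    proof (rule coprimeI)
      fix c assume "c dvd 3 ^ m" "c dvd 2 * n"
      then have "c dvd 3 ^ m - 1" using N dvd_trans by blast
      then have "c dvd 3 ^ m - (3 ^ m - 1)" using \<open>c dvd 3 ^ m\<close> dvd_diff_nat by blast
      moreover have "(3::nat) ^ m - (3 ^ m - 1) = 1" by (simp add: Suc_leI)
      ultimately show "is_unit c" by simp
    qed
    then show ?thesis using assms(1) by (simp add: coprime_commute)
  qed
  define d where "d = ord (2*n) 3"
  have d0: "d > 0" unfolding d_def using cop by simp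
  have dm: "d dvd m" unfolding d_def using N cong3 ord_divides by blast
  have dN: "2 * n dvd 3 ^ d - 1" unfolding d_def using ord[of 3 "2*n"] cong3 by blast
  have "(3::nat) ^ d \<ge> 1" by simp
  have "3 ^ d - 1 > (0::nat)" using one_less_power[of "3::nat" d] d0 by simp
  then have le: "2 * n \<le> 3 ^ d - 1" using dN by (simp add: dvd_imp_le)
  show "ord (2 * n) 3 = m"
  proof (rule ccontr)
    assume "ord (2 * n) 3 \<noteq> m"
    then have "d \<noteq> m" unfolding d_def .
    obtain k where k: "m = d * k" using dm by blast
    then have "k \<noteq> 1" using \<open>d \<noteq> m\<close> by auto
    have "k \<noteq> 0" using k assms(1) by (cases "k = 0") auto
    then have "k \<ge> 2" using \<open>k \<noteq> 1\<close> by simp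
    then have "d * 2 \<le> m" using k by simp
    then have "d \<le> m div 2" by simp
    then have "(3::nat) ^ d \<le> 3 ^ (m div 2)" by (rule power_increasing) simp
    then show False using le big by linarith
  qed
  then have dmm: "d = m" unfolding d_def .
  fix j assume j: "j < m"
  show "\<not> (2 * n) dvd 3 ^ j + 1"
  proof
    assume h: "2 * n dvd 3 ^ j + 1"
    have eq: "(3::nat) ^ (2*j) - 1 = (3 ^ j + 1) * (3 ^ j - 1)"
      by (simp add: power_mult algebra_simps power2_eq_square diff_mult_distrib2)
    have "2 * n dvd 3 ^ (2*j) - 1" unfolding eq by (rule dvd_mult2[OF h])
    then have "m dvd 2 * j" using ord_divides cong3 dmm d_def by metis
    show False
    proof (cases "j = 0")
      case True
      have e2: "(3::nat) ^ j + 1 = 2" using True by simp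
      have "2*n dvd 2" using h unfolding e2 .
      then have "2*n \<le> 2" by (rule dvd_imp_le) simp
      then show False using n2 by simp
    next
      case False
      obtain k where k: "2 * j = m * k" using \<open>m dvd 2 * j\<close> by blast
      have "m * k < m * 2" using j k by linarith
      then have "k < 2" by simp
      moreover have "k \<noteq> 0" using k False by (cases "k = 0") auto
      ultimately have "k = 1" by simp
      then have "j = m div 2" using k by simp
      then have "2 * n \<le> 3 ^ (m div 2) + 1" using h by (simp add: dvd_imp_le)
      then show False using big by simp
    qed
  qed
qed


lemma prod_shift_cyclic:
  fixes f :: "nat \<Rightarrow> 'b::comm_monoid_mult"
  assumes "f m = f 0"
  shows "(\<Prod>j<m. f (Suc j)) = (\<Prod>j<m. f j)"
proof (cases m)
  case 0 then show ?thesis by simp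
next
  case (Suc k)
  have "(\<Prod>j<m. f (Suc j)) = (\<Prod>j<k. f (Suc j)) * f (Suc k)" using Suc by simp
  also have "\<dots> = f 0 * (\<Prod>j<k. f (Suc j))" using assms Suc by (simp add: mult.commute)
  also have "\<dots> = (\<Prod>j<m. f j)" by (simp only: Suc prod.lessThan_Suc_shift)
  finally show ?thesis .
qed

lemma cube_cases:
  fixes c :: "'a::field"
  assumes "c ^ 3 = c"
  shows "c = 0 \<or> c = 1 \<or> c = -1"
proof -
  have "c * (c - 1) * (c + 1) = c ^ 3 - c" by (simp add: algebra_simps power3_eq_cube)
  then have "c * (c - 1) * (c + 1) = 0" using assms by simp
  then show ?thesis by (auto simp: eq_neg_iff_add_eq_0)
qed

lemma prim_dvd:
  fixes \<beta> :: "'a::field"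
  assumes "primitive_root_unity N \<beta>" "N > 0" "\<beta> ^ k = 1"
  shows "N dvd k"
proof (rule ccontr)
  assume "\<not> N dvd k"
  then have km: "k mod N \<noteq> 0" using dvd_eq_mod_eq_0 by blast
  have "\<beta> ^ k = (\<beta> ^ N) ^ (k div N) * \<beta> ^ (k mod N)"
    by (metis div_mult_mod_eq power_add power_mult mult.commute)
  then have "\<beta> ^ (k mod N) = 1" using assms unfolding primitive_root_unity_def by simp
  moreover have "0 < k mod N" "k mod N < N" using km assms(2) by auto
  ultimately show False using assms(1) unfolding primitive_root_unity_def by blast
qed


context
  fixes dummy :: "'a::field itself"
  assumes char3: "CHAR('a) = 3"
begin

interpretation E: field_hom "gf3_emb :: gf3 \<Rightarrow> 'a" by (rule gf3_emb_hom[OF char3])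
interpretation EP: map_poly_inj_idom_hom "gf3_emb :: gf3 \<Rightarrow> 'a" ..
interpretation Fr: field_hom "\<lambda>x::'a. x ^ 3" by (rule frob_hom[OF char3])
interpretation FrP: map_poly_comm_ring_hom "\<lambda>x::'a. x ^ 3" ..


abbreviation ev :: "gf3 poly \<Rightarrow> 'a \<Rightarrow> 'a" where "ev p x \<equiv> poly (map_poly gf3_emb p) x"

lemma ev_smult: "ev (smult c p) x = gf3_emb c * ev p x"
  by (simp add: E.map_poly_hom_smult)
lemma ev_mult: "ev (p * q) x = ev p x * ev q x"
  by (simp add: EP.hom_mult)
lemma ev_diff: "ev (p - q) x = ev p x - ev q x"
  by (simp add: EP.hom_minus)

definition isminp :: "'a \<Rightarrow> gf3 poly \<Rightarrow> bool" where
  "isminp \<alpha> p \<longleftrightarrow> lead_coeff p = 1 \<and> ev p \<alpha> = 0 \<and>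
      (\<forall>q. q \<noteq> 0 \<and> ev q \<alpha> = 0 \<longrightarrow> degree p \<le> degree q)"

lemma minp_ex1:
  assumes "q0 \<noteq> 0" "ev q0 \<alpha> = 0"
  shows "\<exists>!p. isminp \<alpha> p"
proof -
  define d where "d = (LEAST d. \<exists>q. q \<noteq> 0 \<and> ev q \<alpha> = 0 \<and> degree q = d)"
  have "\<exists>q. q \<noteq> 0 \<and> ev q \<alpha> = 0 \<and> degree q = d"
    unfolding d_def by (rule LeastI_ex) (use assms in blast)
  then obtain q where q: "q \<noteq> 0" "ev q \<alpha> = 0" "degree q = d" by blast
  have dmin: "d \<le> degree q'" if "q' \<noteq> 0" "ev q' \<alpha> = 0" for q'
    unfolding d_def by (rule Least_le) (use that in blast)
  define p where "p = smult (inverse (lead_coeff q)) q"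
  have lq: "lead_coeff q \<noteq> 0" by (rule leading_coeff_neq_0[OF q(1)])
  have pm: "isminp \<alpha> p"
    unfolding isminp_def p_def using q lq dmin by (simp add: ev_smult)
  moreover have "p' = p" if "isminp \<alpha> p'" for p'
  proof (rule ccontr)
    assume ne: "p' \<noteq> p"
    have p0: "p \<noteq> 0" "p' \<noteq> 0" using pm that unfolding isminp_def by auto
    have "degree p' \<le> degree p" using pm that p0 unfolding isminp_def by blast
    moreover have "degree p \<le> degree p'" using pm that p0 unfolding isminp_def by blast
    ultimately have deq: "degree p' = degree p" by simp
    define r where "r = p' - p"
    have r0: "r \<noteq> 0" using ne r_def by simp
    have "ev r \<alpha> = 0" using pm that unfolding isminp_def r_def by (simp add: ev_diff)
    then have "degree p \<le> degree r" using pm r0 unfolding isminp_def by blast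
    moreover have "degree r \<le> degree p" unfolding r_def using deq
      by (metis degree_diff_le order.refl)
    moreover have "coeff r (degree p) = 0" unfolding r_def using pm that deq unfolding isminp_def
      by simp
    ultimately have "coeff r (degree r) = 0" by simp
    then show False using r0 by simp
  qed
  ultimately show ?thesis by blast
qed

lemma min_poly_isminp:
  assumes "q0 \<noteq> 0" "ev q0 \<alpha> = 0"
  shows "isminp \<alpha> (min_poly_gf3 \<alpha>)"
proof -
  have eq: "min_poly_gf3 \<alpha> = (THE p. isminp \<alpha> p)"
    unfolding min_poly_gf3_def isminp_def ..
  show ?thesis unfolding eq by (rule theI'[OF minp_ex1[OF assms]])
qed

lemma isminp_dvd:
  assumes "isminp \<alpha> M" "ev p \<alpha> = 0"
  shows "M dvd p"
proof -
  have M0: "M \<noteq> 0" using assms unfolding isminp_def by auto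
  have "p mod M = p - p div M * M" by (simp add: minus_div_mult_eq_mod)
  then have "ev (p mod M) \<alpha> = ev p \<alpha> - ev (p div M) \<alpha> * ev M \<alpha>" by (simp add: ev_diff ev_mult)
  then have "ev (p mod M) \<alpha> = 0" using assms unfolding isminp_def by simp
  show ?thesis
  proof (rule ccontr)
    assume "\<not> M dvd p"
    then have "p mod M \<noteq> 0" by (simp add: mod_eq_0_iff_dvd)
    then have "degree (p mod M) < degree M" using degree_mod_less[OF M0] by blast
    moreover have "degree M \<le> degree (p mod M)" using assms \<open>p mod M \<noteq> 0\<close> \<open>ev (p mod M) \<alpha> = 0\<close>
      unfolding isminp_def by blast
    ultimately show False by simp
  qed
qed

lemma isminp_irred:
  assumes "isminp \<alpha> M"
  shows "irreducible M"
proof -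
  have M0: "M \<noteq> 0" and r: "ev M \<alpha> = 0" using assms unfolding isminp_def by auto
  have dM: "degree M \<noteq> 0"
  proof
    assume "degree M = 0"
    then have "M = [:coeff M 0:]" by (simp add: degree_0_id)
    moreover have "coeff M 0 = 1" using assms \<open>degree M = 0\<close> unfolding isminp_def by simp
    ultimately have "M = [:1:]" by simp
    then show False using r by simp
  qed
  show ?thesis unfolding irreducible_def
  proof (intro conjI allI impI)
    show "M \<noteq> 0" by fact
    show "\<not> M dvd 1" using dM by (simp add: is_unit_iff_degree[OF M0])
    fix a b assume ab: "M = a * b"
    then have a0: "a \<noteq> 0" and b0: "b \<noteq> 0" using M0 by (auto simp del: mult_eq_0_iff)
    have dab: "degree M = degree a + degree b" using ab a0 b0 by (simp add: degree_mult_eq)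
    have "ev a \<alpha> = 0 \<or> ev b \<alpha> = 0" using r ab by (simp add: ev_mult)
    then show "a dvd 1 \<or> b dvd 1"
    proof
      assume "ev a \<alpha> = 0"
      then have "degree M \<le> degree a" using assms a0 unfolding isminp_def by blast
      then have "degree b = 0" using dab by simp
      then show ?thesis using b0 by (simp add: is_unit_iff_degree)
    next
      assume "ev b \<alpha> = 0"
      then have "degree M \<le> degree b" using assms b0 unfolding isminp_def by blast
      then have "degree a = 0" using dab by simp
      then show ?thesis using a0 by (simp add: is_unit_iff_degree)
    qed
  qed
qed



lemma in_range_emb:
  fixes c :: 'a
  assumes "c ^ 3 = c"
  shows "\<exists>g. gf3_emb g = c"
proof -
  have "c = 0 \<or> c = 1 \<or> c = -1" by (rule cube_cases[OF assms])
  then show ?thesis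
  proof (elim disjE)
    assume "c = 0" then show ?thesis by (intro exI[of _ 0]) simp
  next
    assume "c = 1" then show ?thesis by (intro exI[of _ 1]) simp
  next
    assume "c = -1" then show ?thesis by (intro exI[of _ "-1"]) (simp add: E.hom_uminus)
  qed
qed

lemma orbit_poly:
  fixes \<beta> :: 'a
  assumes "\<beta> ^ (3 ^ m) = \<beta>"
  shows "\<exists>Q. map_poly gf3_emb Q = (\<Prod>j<m. [:-(\<beta> ^ (3 ^ j)), 1:])"
proof -
  define f where "f = (\<lambda>j::nat. [:-(\<beta> ^ (3 ^ j)), 1:])"
  define P where "P = (\<Prod>j<m. f j)"
  have fS: "map_poly (\<lambda>x::'a. x ^ 3) (f j) = f (Suc j)" for j
  proof -
    have "(\<beta> ^ 3 ^ j) ^ 3 = \<beta> ^ 3 ^ Suc j" by (simp add: power_mult[symmetric] mult.commute)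
    then show ?thesis unfolding f_def by (simp add: Fr.map_poly_pCons_hom)
  qed
  have fm: "f m = f 0" unfolding f_def using assms by simp
  have fixP: "map_poly (\<lambda>x::'a. x ^ 3) P = P"
    unfolding P_def FrP.hom_prod fS using prod_shift_cyclic[OF fm] by simp
  have cub: "(coeff P i) ^ 3 = coeff P i" for i
  proof -
    have "coeff (map_poly (\<lambda>x::'a. x ^ 3) P) i = (coeff P i) ^ 3" by (simp add: coeff_map_poly)
    then show ?thesis using fixP by simp
  qed
  define G where "G = (\<lambda>c::'a. SOME g. gf3_emb g = c)"
  have G: "gf3_emb (G c) = c" if "c ^ 3 = c" for c
    unfolding G_def using in_range_emb[OF that] by (rule someI_ex)
  have G0: "G 0 = 0"
  proof -
    have "gf3_emb (G 0) = (0::'a)" by (rule G) simp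
    then show ?thesis by simp
  qed
  have "map_poly gf3_emb (map_poly G P) = P"
  proof (rule poly_eqI)
    fix i
    show "coeff (map_poly gf3_emb (map_poly G P)) i = coeff P i"
      by (simp add: coeff_map_poly G0 G[OF cub])
  qed
  then show ?thesis unfolding P_def f_def by blast
qed

lemma main_coprime:
  fixes \<beta> :: 'a
  assumes prim: "primitive_root_unity N \<beta>" and N0: "N > 0" and m0: "m > 0"
    and orb: "\<beta> ^ (3 ^ m) = \<beta>" and nd: "\<And>j. j < m \<Longrightarrow> \<not> N dvd 3 ^ j + 1"
  shows "lcm (min_poly_gf3 \<beta>) (min_poly_gf3 (\<beta> ^ (N - 1))) =
      min_poly_gf3 \<beta> * min_poly_gf3 (\<beta> ^ (N - 1))"
proof -
  define \<gamma> where "\<gamma> = \<beta> ^ (N - 1)"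
  have bN: "\<beta> ^ N = 1" using prim unfolding primitive_root_unity_def by simp
  have "\<gamma> * \<beta> = \<beta> ^ Suc (N - 1)" unfolding \<gamma>_def by (simp only: power_Suc2)
  then have bg: "\<gamma> * \<beta> = 1" using bN N0 by simp
  have "\<gamma> ^ N = (\<beta> ^ N) ^ (N - 1)" unfolding \<gamma>_def by (simp only: power_mult[symmetric] mult.commute)
  then have gN: "\<gamma> ^ N = 1" using bN by simp
  define X :: "gf3 poly" where "X = monom 1 N - 1"
  have X0: "X \<noteq> 0"
  proof
    assume "X = 0"
    then have "coeff X N = 0" by simp
    then show False unfolding X_def using N0 by simp
  qed
  have evX: "ev X x = x ^ N - 1" for x :: 'a
    unfolding X_def by (simp add: EP.hom_minus map_poly_monom poly_monom)
  have M1: "isminp \<beta> (min_poly_gf3 \<beta>)"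
    by (rule min_poly_isminp[OF X0]) (simp add: evX bN)
  have M2: "isminp \<gamma> (min_poly_gf3 \<gamma>)"
    by (rule min_poly_isminp[OF X0]) (simp add: evX gN)
  define A where "A = min_poly_gf3 \<beta>"
  define B where "B = min_poly_gf3 \<gamma>"
  have irrA: "irreducible A" unfolding A_def by (rule isminp_irred[OF M1])
  have A0: "A \<noteq> 0" and dA: "degree A \<noteq> 0"
    using irrA irreducible_def[of A] is_unit_iff_degree[of A] by auto
  have B0: "B \<noteq> 0" using M2 unfolding B_def isminp_def by auto
  obtain Q where Q: "map_poly gf3_emb Q = (\<Prod>j<m. [:-(\<beta> ^ (3 ^ j)), 1:])"
    using orbit_poly[OF orb] by blast
  have evQ: "ev Q x = (\<Prod>j<m. x - \<beta> ^ (3 ^ j))" for x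
    unfolding Q by (simp add: poly_prod)
  have Qb: "ev Q \<beta> = 0" unfolding evQ using m0
    by (intro prod_zero[of "{..<m}"]) (auto intro!: bexI[of _ 0])
  have "\<not> ev A \<gamma> = 0"
  proof
    assume "ev A \<gamma> = 0"
    have "A dvd Q" unfolding A_def by (rule isminp_dvd[OF M1 Qb])
    then obtain r where "Q = A * r" by blast
    then have "ev Q \<gamma> = 0" using \<open>ev A \<gamma> = 0\<close> by (simp add: EP.hom_mult)
    then obtain j where j: "j < m" "\<gamma> - \<beta> ^ (3 ^ j) = 0" unfolding evQ by auto
    then have "\<beta> ^ (3 ^ j + 1) = 1" using bg by (simp add: mult.commute)
    then have "N dvd 3 ^ j + 1" by (rule prim_dvd[OF prim N0])
    then show False using nd j by blast
  qed
  have cop: "coprime A B"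
  proof (rule ccontr)
    assume nc: "\<not> coprime A B"
    define g where "g = gcd A B"
    have gu: "\<not> is_unit g" unfolding g_def using nc is_unit_gcd by blast
    have "g dvd A" unfolding g_def by simp
    then obtain h where h: "A = g * h" by blast
    then have "is_unit g \<or> is_unit h" using irrA unfolding irreducible_def by blast
    then have hu: "is_unit h" using gu by blast
    have "A dvd g" using hu h by (simp add: mult_unit_dvd_iff)
    also have "g dvd B" unfolding g_def by simp
    finally obtain k where k: "B = A * k" by blast
    have k0: "k \<noteq> 0" using B0 k by auto
    have "ev B \<gamma> = 0" using M2 unfolding B_def isminp_def by simp
    then have "ev A \<gamma> * ev k \<gamma> = 0" using k by (simp add: EP.hom_mult)
    then have "ev k \<gamma> = 0" using \<open>\<not> ev A \<gamma> = 0\<close> by simp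
    then have "degree B \<le> degree k" using M2 k0 unfolding B_def isminp_def by blast
    moreover have "degree B = degree A + degree k" using k A0 k0 by (simp add: degree_mult_eq)
    ultimately show False using dA by simp
  qed
  have "lead_coeff (A * B) = 1" using M1 M2 unfolding A_def B_def isminp_def by (simp add: lead_coeff_mult)
  then have "normalize (A * B) = A * B" by (simp add: normalize_monic)
  then show ?thesis unfolding A_def[symmetric] \<gamma>_def[symmetric] B_def[symmetric]
    using lcm_coprime[OF cop] by simp
qed


end

theorem lemma30:
  fixes m n :: nat and \<beta> :: "'a::field"
  assumes "CHAR('a) = 3"
    and "m \<ge> 3"
    and "n > 0" and "n dvd (3 ^ m - 1) div 2"
    and "real n > (3 ^ (m div 2) + 1) / 2"
    and "primitive_root_unity (2 * n) \<beta>"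
  shows "ord (2 * n) 3 = m \<and>
    lcm (min_poly_gf3 \<beta>) (min_poly_gf3 (\<beta> ^ (2 * n - 1))) =
      min_poly_gf3 \<beta> * min_poly_gf3 (\<beta> ^ (2 * n - 1))"
proof -
  note nt = nt_part[OF assms(2-5)]
  have N0: "2 * n > 0" using assms(3) by simp
  have ev2: "even (3 ^ m - 1 :: nat)" by simp
  have N: "2 * n dvd 3 ^ m - 1" using assms(4) ev2
    by (metis dvd_mult_div_cancel mult_dvd_mono dvd_refl)
  have bN: "\<beta> ^ (2 * n) = 1" using assms(6) unfolding primitive_root_unity_def by simp
  obtain t where t: "3 ^ m - 1 = 2 * n * t" using N by blast
  have "\<beta> ^ (3 ^ m - 1) = (\<beta> ^ (2 * n)) ^ t" unfolding t by (simp only: power_mult)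
  then have "\<beta> ^ (3 ^ m - 1) = 1" using bN by simp
  moreover have "(3::nat) ^ m = Suc (3 ^ m - 1)" by simp
  ultimately have orb: "\<beta> ^ (3 ^ m) = \<beta>" by (metis power_Suc mult_1_right)
  have m0: "m > 0" using assms(2) by simp
  have "lcm (min_poly_gf3 \<beta>) (min_poly_gf3 (\<beta> ^ (2 * n - 1))) =
      min_poly_gf3 \<beta> * min_poly_gf3 (\<beta> ^ (2 * n - 1))"
    by (rule main_coprime[OF assms(1) assms(6) N0 m0 orb nt(2)])
  then show ?thesis using nt(1) by simp
qed

end
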